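(* Let $r\in\mathbb C$ be transcendental over $\mathbb Q$. Let $\Psi_r:\mathsf{PGL}_2(\mathbb Z)\to\mathsf{PGL}_2(\mathbb C)$ (resp. $\Psi^\pm_r$) be the homomorphism obtained from $\Psi$ (resp. $\Psi^\pm$) by substituting $q=r$ in the matrices (after clearing denominators, so that entries are polynomials in $q$ with coefficients in $\mathbb Z[\omega]$). Then $\Psi_r$ and $\Psi^\pm_r$ are injective; i.e. the specialization maps $\Psi(\mathsf{PGL}_2(\mathbb Z))\to\Psi_r(\mathsf{PGL}_2(\mathbb Z))$ and $\Psi^\pm(\mathsf{PGL}_2(\mathbb Z))\to\Psi^\pm_r(\mathsf{PGL}_2(\mathbb Z))$ are isomorphisms.
   Context: $\omega=e^{2\pi i/6}$. An invertible matrix $\begin{bmatrix}a&b\\c&d\end{bmatrix}$ denotes the Möbius map $x\mapsto(ax+b)/(cx+d)$. $\Psi,\Psi^\pm:\mathsf{PGL}_2(\mathbb Z)\to\mathsf{PGL}_2(\mathbb C(q))$ are the homomorphisms defined on the generators $T(x)=1+x$, $S(x)=-1/x$, $V(x)=-x$ by $\Psi(T)=\Psi^\pm(T)=\begin{bmatrix}q&1\\0&1\end{bmatrix}$, $\Psi(S)=\begin{bmatrix}0&-1\\ q&0\end{bmatrix}$, $\Psi(V)=\begin{bmatrix}q&1-q\\ q-q^2&-q\end{bmatrix}$, $\Psi^{\pm}(S)=\begin{bmatrix}1&q^{-1}\\ -q+\omega^{\pm1}&-1\end{bmatrix}$, $\Psi^{\pm}(V)=\begin{bmatrix}1&\frac{1+q^{-1}}{q-\omega^{\pm1}}\\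 1-q&-1\end{bmatrix}$. *)

theory Defs
  imports "HOL-Analysis.Analysis" "HOL-Computational_Algebra.Polynomial"
begin

definition mat2 :: "'a \<Rightarrow> 'a \<Rightarrow> 'a \<Rightarrow> 'a \<Rightarrow> 'a^2^2" where
  "mat2 a b c d = (\<chi> i j. if i = 1 then (if j = 1 then a else b) else (if j = 1 then c else d))"

text \<open>Generators T(x)=1+x, S(x)=-1/x, V(x)=-x of PGL_2(Z); a letter is a generator
  together with a flag saying whether it is the generator (True) or its inverse (False).\<close>
datatype gen = GT | GS | GV

type_synonym word = "(gen \<times> bool) list"

definition omega :: complex where "omega = cis (pi / 3)"

fun genZ :: "gen \<times> bool \<Rightarrow> int^2^2" where
  "genZ (GT, True) = mat2 1 1 0 1"
| "genZ (GT, False) = mat2 1 (-1) 0 1"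
| "genZ (GS, True) = mat2 0 (-1) 1 0"
| "genZ (GS, False) = mat2 0 1 (-1) 0"
| "genZ (GV, _) = mat2 (-1) 0 0 1"

definition evalZ :: "word \<Rightarrow> int^2^2" where
  "evalZ w = foldr (\<lambda>l M. genZ l ** M) w (mat 1)"

definition pglZ_eq :: "int^2^2 \<Rightarrow> int^2^2 \<Rightarrow> bool" where
  "pglZ_eq A B \<longleftrightarrow> A = B \<or> A = - B"

datatype rep = Psi | PsiPlus | PsiMinus

text \<open>Specialised images of the generators at q, with denominators cleared
  (Psi^{pm}(S) multiplied by q, Psi^{pm}(V) multiplied by q(q - omega^{pm1})).\<close>
fun genC :: "rep \<Rightarrow> complex \<Rightarrow> gen \<Rightarrow> complex^2^2" where
  "genC _ q GT = mat2 q 1 0 1"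
| "genC Psi q GS = mat2 0 (-1) q 0"
| "genC Psi q GV = mat2 q (1 - q) (q - q^2) (-q)"
| "genC PsiPlus q GS = mat2 q 1 (q * (omega - q)) (-q)"
| "genC PsiMinus q GS = mat2 q 1 (q * (inverse omega - q)) (-q)"
| "genC PsiPlus q GV = mat2 (q * (q - omega)) (q + 1) ((1 - q) * q * (q - omega)) (- q * (q - omega))"
| "genC PsiMinus q GV = mat2 (q * (q - inverse omega)) (q + 1) ((1 - q) * q * (q - inverse omega)) (- q * (q - inverse omega))"

text \<open>Adjugate: projectively the inverse of an invertible 2x2 matrix.\<close>
definition adj2 :: "complex^2^2 \<Rightarrow> complex^2^2" where
  "adj2 M = mat2 (M$2$2) (- M$1$2) (- M$2$1) (M$1$1)"

fun letterC :: "rep \<Rightarrow> complex \<Rightarrow> gen \<times> bool \<Rightarrow> complex^2^2" where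
  "letterC \<psi> q (g, True) = genC \<psi> q g"
| "letterC \<psi> q (g, False) = adj2 (genC \<psi> q g)"

definition evalC :: "rep \<Rightarrow> complex \<Rightarrow> word \<Rightarrow> complex^2^2" where
  "evalC \<psi> q w = foldr (\<lambda>l M. letterC \<psi> q l ** M) w (mat 1)"

definition pglC_eq :: "complex^2^2 \<Rightarrow> complex^2^2 \<Rightarrow> bool" where
  "pglC_eq A B \<longleftrightarrow> (\<exists>c. c \<noteq> 0 \<and> A = (\<chi> i j. c * B$i$j))"

end

theory Submission
  imports Defs
begin
lemma two_ne: "(1::2) \<noteq> 2" by simp

lemma mat2_nth [simp]:
  "mat2 a b c d $ 1 $ 1 = a" "mat2 a b c d $ 1 $ 2 = b"
  "mat2 a b c d $ 2 $ 1 = c" "mat2 a b c d $ 2 $ 2 = d"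
  by (simp_all add: mat2_def)

lemma mat2_eta: "M = mat2 (M$1$1) (M$1$2) (M$2$1) (M$2$2)"
  unfolding mat2_def by (simp add: vec_eq_iff forall_2)

lemma mat2_eq_iff: "mat2 a b c d = mat2 a' b' c' d' \<longleftrightarrow> a = a' \<and> b = b' \<and> c = c' \<and> d = d'"
  by (metis mat2_nth)

lemma mat2_mult: "(mat2 a b c d :: 'a::semiring_1^2^2) ** mat2 e f g h
   = mat2 (a*e+b*g) (a*f+b*h) (c*e+d*g) (c*f+d*h)"
  unfolding mat2_def by (simp add: vec_eq_iff forall_2 matrix_matrix_mult_def sum_2)

lemma mat1_mat2: "(mat 1 :: 'a::zero_neq_one^2^2) = mat2 1 0 0 1"
  unfolding mat2_def by (simp add: vec_eq_iff forall_2 mat_def)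

lemma omega_sq: "omega * omega = omega - 1"
proof -
  have o: "omega = Complex (1/2) (sqrt 3/2)"
    by (simp add: omega_def cis.ctr cos_60 sin_60)
  show ?thesis unfolding o
    by (simp add: complex_eq_iff power2_eq_square)
qed

lemma omega_inv: "inverse omega = 1 - omega"
proof -
  have "omega * (1 - omega) = 1" using omega_sq by (simp add: algebra_simps)
  thus ?thesis by (metis inverse_unique)
qed

lemma omega_Im: "Im omega \<noteq> 0"
  by (simp add: omega_def sin_60)


definition zc :: "complex poly \<Rightarrow> bool" where "zc p \<longleftrightarrow> (\<forall>i. coeff p i \<in> \<int>)"

lemma zc_0: "zc 0" by (simp add: zc_def)
lemma zc_const: "k \<in> \<int> \<Longrightarrow> zc [:k:]" by (simp add: zc_def coeff_pCons split: nat.split)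
lemma zc_X: "zc [:0,1:]" by (simp add: zc_def coeff_pCons split: nat.split)
lemma zc_add: "zc p \<Longrightarrow> zc q \<Longrightarrow> zc (p + q)" by (simp add: zc_def)
lemma zc_diff: "zc p \<Longrightarrow> zc q \<Longrightarrow> zc (p - q)" by (simp add: zc_def)
lemma zc_uminus: "zc p \<Longrightarrow> zc (- p)" by (simp add: zc_def)
lemma zc_mult: "zc p \<Longrightarrow> zc q \<Longrightarrow> zc (p * q)"
  unfolding zc_def coeff_mult by (intro allI Ints_sum Ints_mult) auto

lemma zc_poly1: "zc p \<Longrightarrow> poly p 1 \<in> \<int>"
proof (induction p)
  case (pCons a p)
  have "a \<in> \<int>" using pCons.prems[unfolded zc_def, rule_format, of 0] by simp
  moreover have "zc p" using pCons.prems unfolding zc_def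
    by (metis coeff_pCons_Suc)
  ultimately show ?case using pCons.IH by simp
qed simp

definition PF :: "(complex \<Rightarrow> complex) \<Rightarrow> bool" where
  "PF f \<longleftrightarrow> (\<exists>a b. zc a \<and> zc b \<and> (\<forall>q. f q = poly a q + omega * poly b q))"

lemma PF_const: "x \<in> \<int> \<Longrightarrow> y \<in> \<int> \<Longrightarrow> PF (\<lambda>q. x + omega * y)"
  unfolding PF_def by (rule exI[of _ "[:x:]"], rule exI[of _ "[:y:]"]) (simp add: zc_const)

lemma PF_0: "PF (\<lambda>q. 0)" using PF_const[of 0 0] by simp
lemma PF_1: "PF (\<lambda>q. 1)" using PF_const[of 1 0] by simp
lemma PF_omega: "PF (\<lambda>q. omega)" using PF_const[of 0 1] by simp
lemma PF_inv_omega: "PF (\<lambda>q. inverse omega)" using PF_const[of 1 "-1"] by (simp add: omega_inv)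
lemma PF_id: "PF (\<lambda>q. q)"
  unfolding PF_def by (rule exI[of _ "[:0,1:]"], rule exI[of _ 0]) (simp add: zc_X zc_0)

lemma PF_add: "PF f \<Longrightarrow> PF g \<Longrightarrow> PF (\<lambda>q. f q + g q)"
proof -
  assume "PF f" "PF g"
  then obtain a b c d where "zc a" "zc b" "\<forall>q. f q = poly a q + omega * poly b q"
    "zc c" "zc d" "\<forall>q. g q = poly c q + omega * poly d q" unfolding PF_def by blast
  thus ?thesis unfolding PF_def
    by (intro exI[of _ "a + c"] exI[of _ "b + d"]) (simp add: zc_add algebra_simps)
qed

lemma PF_uminus: "PF f \<Longrightarrow> PF (\<lambda>q. - f q)"
proof -
  assume "PF f"
  then obtain a b where "zc a" "zc b" "\<forall>q. f q = poly a q + omega * poly b q"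
    unfolding PF_def by blast
  thus ?thesis unfolding PF_def
    by (intro exI[of _ "- a"] exI[of _ "- b"]) (simp add: zc_uminus algebra_simps)
qed

lemma PF_diff: "PF f \<Longrightarrow> PF g \<Longrightarrow> PF (\<lambda>q. f q - g q)"
  using PF_add[of f "\<lambda>q. - g q"] PF_uminus[of g] by simp

lemma PF_mult: "PF f \<Longrightarrow> PF g \<Longrightarrow> PF (\<lambda>q. f q * g q)"
proof -
  assume "PF f" "PF g"
  then obtain a b c d where h: "zc a" "zc b" "\<forall>q. f q = poly a q + omega * poly b q"
    "zc c" "zc d" "\<forall>q. g q = poly c q + omega * poly d q" unfolding PF_def by blast
  have e: "(A + omega * B) * (C + omega * D) = (A*C - B*D) + omega * (A*D + B*C + B*D)" for A B C D
  proof -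
    have "(A + omega * B) * (C + omega * D) = A*C + omega*(A*D + B*C) + (omega * omega) * B * D"
      by (simp add: algebra_simps)
    thus ?thesis by (simp add: omega_sq algebra_simps)
  qed
  show ?thesis unfolding PF_def
    by (intro exI[of _ "a * c - b * d"] exI[of _ "a * d + b * c + b * d"])
       (simp add: zc_add zc_mult zc_diff h e)
qed

lemma PF_power2: "PF f \<Longrightarrow> PF (\<lambda>q. (f q)^2)"
  using PF_mult[of f f] by (simp add: power2_eq_square)

lemma PF_zero:
  assumes "\<not> algebraic r" "PF f" "f r = 0"
  shows "f 1 = 0"
proof -
  obtain a b where ab: "zc a" "zc b" "\<And>q. f q = poly a q + omega * poly b q"
    using assms(2) unfolding PF_def by blast
  define h where "h = a*a + a*b + b*b"
  have zh: "zc h" unfolding h_def by (intro zc_add zc_mult ab)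
  have ar: "poly a r = - omega * poly b r" using assms(3) ab(3)[of r]
    by (simp add: eq_neg_iff_add_eq_0)
  have "poly h r = (poly b r)^2 * (omega * omega - omega + 1)"
    unfolding h_def by (simp add: ar algebra_simps power2_eq_square)
  hence "poly h r = 0" by (simp add: omega_sq)
  hence "h = 0" using assms(1) zh algebraicI[of h r] unfolding zc_def by blast
  hence h1: "poly h 1 = 0" by simp
  obtain A where A: "poly a 1 = of_int A" using zc_poly1[OF ab(1)] Ints_cases by metis
  obtain B where B: "poly b 1 = of_int B" using zc_poly1[OF ab(2)] Ints_cases by metis
  have "of_int (A*A + A*B + B*B) = (0::complex)" using h1 unfolding h_def by (simp add: A B)
  hence "A*A + A*B + B*B = 0" by (metis of_int_eq_0_iff)
  hence "(2*A+B)^2 + 3*B^2 = 0" by (simp add: algebra_simps power2_eq_square)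
  hence "B = 0" "A = 0" by (smt (verit) power2_less_eq_zero_iff zero_le_power2)+
  thus ?thesis using ab(3)[of 1] A B by simp
qed

definition MPF :: "(complex \<Rightarrow> complex^2^2) \<Rightarrow> bool" where
  "MPF M \<longleftrightarrow> (\<forall>i j. PF (\<lambda>q. M q $ i $ j))"

lemma MPF_iff: "MPF M \<longleftrightarrow> PF (\<lambda>q. M q $ 1 $ 1) \<and> PF (\<lambda>q. M q $ 1 $ 2) \<and> PF (\<lambda>q. M q $ 2 $ 1) \<and> PF (\<lambda>q. M q $ 2 $ 2)"
  unfolding MPF_def by (simp add: forall_2)

lemma MPF_mat2: "PF a \<Longrightarrow> PF b \<Longrightarrow> PF c \<Longrightarrow> PF d \<Longrightarrow> MPF (\<lambda>q. mat2 (a q) (b q) (c q) (d q))"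
  unfolding MPF_iff by simp

lemmas PF_intros = PF_mult PF_add PF_diff PF_uminus PF_id PF_0 PF_1 PF_omega PF_inv_omega PF_power2

lemma MPF_mult: "MPF A \<Longrightarrow> MPF B \<Longrightarrow> MPF (\<lambda>q. A q ** B q)"
  unfolding MPF_iff by (simp add: matrix_matrix_mult_def sum_2 PF_intros)

lemma MPF_adj2: "MPF A \<Longrightarrow> MPF (\<lambda>q. adj2 (A q))"
  unfolding MPF_iff adj2_def by (simp add: PF_intros)

lemma MPF_mat1: "MPF (\<lambda>q. mat 1)"
  unfolding MPF_iff by (simp add: mat_def PF_intros)

lemma MPF_genC: "MPF (\<lambda>q. genC \<psi> q g)"
  by (cases \<psi>; cases g; simp only: genC.simps; intro MPF_mat2 PF_intros)

lemma MPF_letterC: "MPF (\<lambda>q. letterC \<psi> q l)"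
  by (cases l; cases "snd l"; simp add: MPF_genC MPF_adj2)

lemma evalC_Cons: "evalC \<psi> q (l # w) = letterC \<psi> q l ** evalC \<psi> q w"
  by (simp add: evalC_def)
lemma evalC_Nil: "evalC \<psi> q [] = mat 1"
  by (simp add: evalC_def)
lemma evalZ_Cons: "evalZ (l # w) = genZ l ** evalZ w"
  by (simp add: evalZ_def)
lemma evalZ_Nil: "evalZ [] = mat 1"
  by (simp add: evalZ_def)

lemma MPF_evalC: "MPF (\<lambda>q. evalC \<psi> q w)"
  by (induction w) (simp_all add: evalC_Cons evalC_Nil MPF_mat1 MPF_mult MPF_letterC)

lemma cross_PF: "MPF A \<Longrightarrow> MPF B \<Longrightarrow> PF (\<lambda>q. A q $ i $ j * B q $ k $ l - A q $ k $ l * B q $ i $ j)"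
  unfolding MPF_def by (intro PF_intros) auto

fun tt :: "rep \<Rightarrow> complex" where
  "tt Psi = 0" | "tt PsiPlus = - omega" | "tt PsiMinus = omega - 1"

definition Pm :: "rep \<Rightarrow> complex^2^2" where "Pm \<psi> = mat2 1 (tt \<psi>) 0 1"

definition sc :: "complex \<Rightarrow> complex^2^2 \<Rightarrow> complex^2^2" where
  "sc c M = (\<chi> i j. c * M$i$j)"

definition ofZ :: "int^2^2 \<Rightarrow> complex^2^2" where
  "ofZ M = (\<chi> i j. of_int (M$i$j))"

lemma sc_mat2: "sc c (mat2 a b d e) = mat2 (c*a) (c*b) (c*d) (c*e)"
  unfolding sc_def mat2_def by (simp add: vec_eq_iff forall_2)

lemma ofZ_mat2: "ofZ (mat2 a b d e) = mat2 (of_int a) (of_int b) (of_int d) (of_int e)"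
  unfolding ofZ_def mat2_def by (simp add: vec_eq_iff forall_2)

fun cl :: "rep \<Rightarrow> gen \<Rightarrow> bool \<Rightarrow> complex" where
  "cl _ GT _ = 1"
| "cl Psi GS _ = 1"
| "cl Psi GV b = (if b then -1 else 1)"
| "cl PsiPlus GS _ = omega - 1"
| "cl PsiPlus GV b = (if b then omega - 1 else 1 - omega)"
| "cl PsiMinus GS _ = - omega"
| "cl PsiMinus GV b = (if b then - omega else omega)"

lemma omega_sq': "omega * (omega * x) = omega * x - x"
  by (metis omega_sq mult.assoc left_diff_distrib mult_1)

lemma omega_ne0: "omega \<noteq> 0" using omega_Im by auto
lemma omega_ne1: "omega \<noteq> 1" using omega_Im by auto

lemma cl_ne0: "cl \<psi> g b \<noteq> 0"
  using omega_ne0 omega_ne1 by (cases \<psi>; cases g; cases b) auto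

lemma letter1: "letterC \<psi> 1 (g, b) ** Pm \<psi> = sc (cl \<psi> g b) (Pm \<psi> ** ofZ (genZ (g, b)))"
  by (cases \<psi>; cases g; cases b;
      simp add: Pm_def adj2_def mat2_mult sc_mat2 ofZ_mat2 mat2_eq_iff omega_inv algebra_simps omega_sq omega_sq')

lemma mult_sc_right: "L ** sc c M = sc c (L ** M)"
  unfolding sc_def by (simp add: vec_eq_iff matrix_matrix_mult_def sum_2 algebra_simps)
lemma sc_mult_left: "sc c M ** N = sc c (M ** N)"
  unfolding sc_def by (simp add: vec_eq_iff matrix_matrix_mult_def sum_2 algebra_simps)
lemma sc_sc: "sc c (sc d M) = sc (c*d) M"
  unfolding sc_def by (simp add: vec_eq_iff)
lemma sc_1: "sc 1 M = M"
  unfolding sc_def by (simp add: vec_eq_iff)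
lemma ofZ_mult: "ofZ (A ** B) = ofZ A ** ofZ B"
  unfolding ofZ_def by (simp add: vec_eq_iff matrix_matrix_mult_def sum_2)
lemma ofZ_mat1: "ofZ (mat 1) = mat 1"
  unfolding ofZ_def by (simp add: vec_eq_iff mat_def)

lemma eval1: "\<exists>c. c \<noteq> 0 \<and> evalC \<psi> 1 w ** Pm \<psi> = sc c (Pm \<psi> ** ofZ (evalZ w))"
proof (induction w)
  case Nil
  show ?case by (intro exI[of _ 1]) (simp add: evalC_Nil evalZ_Nil ofZ_mat1 sc_1)
next
  case (Cons l w)
  then obtain c where c: "c \<noteq> 0" "evalC \<psi> 1 w ** Pm \<psi> = sc c (Pm \<psi> ** ofZ (evalZ w))" by blast
  obtain g b where l: "l = (g, b)" by (cases l)
  have "evalC \<psi> 1 (l # w) ** Pm \<psi> = letterC \<psi> 1 l ** (evalC \<psi> 1 w ** Pm \<psi>)"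
    by (simp add: evalC_Cons matrix_mul_assoc)
  also have "\<dots> = sc c ((letterC \<psi> 1 l ** Pm \<psi>) ** ofZ (evalZ w))"
    by (simp add: c(2) mult_sc_right matrix_mul_assoc)
  also have "\<dots> = sc (c * cl \<psi> g b) (Pm \<psi> ** ofZ (evalZ (l # w)))"
    by (simp add: l letter1 sc_mult_left sc_sc evalZ_Cons ofZ_mult matrix_mul_assoc)
  finally show ?case using c(1) cl_ne0[of \<psi> g b] by (intro exI[of _ "c * cl \<psi> g b"]) simp
qed

definition Pinv :: "rep \<Rightarrow> complex^2^2" where "Pinv \<psi> = mat2 1 (- tt \<psi>) 0 1"

lemma Pinv_P: "Pinv \<psi> ** Pm \<psi> = mat 1"
  by (simp add: Pinv_def Pm_def mat2_mult mat1_mat2)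

lemma unconj:
  assumes "X ** Pm \<psi> = sc c (Pm \<psi> ** Y)" "c \<noteq> 0"
  shows "Y = sc (1/c) (Pinv \<psi> ** X ** Pm \<psi>)"
proof -
  have "Pinv \<psi> ** X ** Pm \<psi> = Pinv \<psi> ** (X ** Pm \<psi>)" by (simp only: matrix_mul_assoc)
  also have "\<dots> = sc c (Pinv \<psi> ** (Pm \<psi> ** Y))" by (simp only: assms(1) mult_sc_right)
  also have "Pinv \<psi> ** (Pm \<psi> ** Y) = Y"
    by (metis matrix_mul_assoc Pinv_P matrix_mul_lid)
  finally show ?thesis using assms(2) by (simp add: sc_sc sc_1)
qed

definition detZ :: "int^2^2 \<Rightarrow> int" where "detZ M = M$1$1 * M$2$2 - M$1$2 * M$2$1"

lemma detZ_mult: "detZ (A ** B) = detZ A * detZ B"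
  unfolding detZ_def by (simp add: matrix_matrix_mult_def sum_2, algebra)

lemma detZ_mat2: "detZ (mat2 a b c d) = a * d - b * c"
  unfolding detZ_def by simp

lemma detZ_gen: "detZ (genZ l) = 1 \<or> detZ (genZ l) = -1"
  by (cases l rule: genZ.cases) (simp_all only: genZ.simps detZ_mat2, simp_all)

lemma detZ_eval: "detZ (evalZ w) = 1 \<or> detZ (evalZ w) = -1"
proof (induction w)
  case Nil thus ?case by (simp add: evalZ_Nil detZ_def mat_def)
next
  case (Cons l w)
  have "detZ (evalZ (l # w)) = detZ (genZ l) * detZ (evalZ w)"
    by (simp only: evalZ_Cons detZ_mult)
  with Cons.IH detZ_gen[of l] show ?case by auto
qed

lemma proportional:
  assumes "B $ k $ l \<noteq> 0" "\<forall>i j k l. A$i$j * B$k$l - A$k$l * B$i$j = 0"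
  shows "A = sc (A$k$l / B$k$l) B"
  unfolding sc_def vec_eq_iff
proof (intro allI)
  fix i j
  have "A$i$j * B$k$l = A$k$l * B$i$j" using assms(2) by (metis eq_iff_diff_eq_0)
  hence h: "A$k$l * B$i$j = A$i$j * B$k$l" by simp
  have "A$k$l / B$k$l * B$i$j = (A$k$l * B$i$j) / B$k$l" by simp
  also have "\<dots> = (A$i$j * B$k$l) / B$k$l" by (simp only: h)
  also have "\<dots> = A$i$j" using assms(1) by simp
  finally show "A$i$j = (\<chi> i j. A$k$l / B$k$l * B$i$j) $ i $ j" by simp
qed

lemma final_int:
  assumes "ofZ Z1 = sc m (ofZ Z2)" "detZ Z1 = 1 \<or> detZ Z1 = -1" "detZ Z2 = 1 \<or> detZ Z2 = -1"
  shows "Z1 = Z2 \<or> Z1 = - Z2"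
proof -
  have e: "of_int (Z1$i$j) = m * of_int (Z2$i$j)" for i j
    using assms(1) unfolding ofZ_def sc_def vec_eq_iff by auto
  have "of_int (detZ Z1) = m^2 * of_int (detZ Z2)"
    unfolding detZ_def by (simp add: e algebra_simps power2_eq_square)
  hence deq: "of_int (detZ Z1) = m^2 * of_int (detZ Z2)" .
  have dd: "detZ Z2 * detZ Z2 = 1" using assms(3) by auto
  have "of_int (detZ Z1 * detZ Z2) = m^2 * of_int (detZ Z2 * detZ Z2)"
    by (simp add: deq)
  hence mm: "m^2 = of_int (detZ Z1 * detZ Z2)" by (simp add: dd)
  have "detZ Z1 * detZ Z2 = 1 \<or> detZ Z1 * detZ Z2 = -1" using assms(2,3) by auto
  moreover have "\<And>D::int. D = 1 \<or> D = -1 \<Longrightarrow> m^2 = of_int D \<Longrightarrow> m^2 = 1 \<or> m^2 = -1"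
    by auto
  ultimately have m2: "m^2 = 1 \<or> m^2 = -1" using mm by blast
  have "\<exists>i j. Z2$i$j \<noteq> 0"
  proof (rule ccontr)
    assume "\<not> (\<exists>i j. Z2$i$j \<noteq> 0)"
    hence "\<forall>i j. Z2$i$j = 0" by blast
    hence "detZ Z2 = 0" by (simp add: detZ_def)
    with assms(3) show False by simp
  qed
  then obtain i j where ij: "Z2$i$j \<noteq> 0" by blast
  have "m = of_int (Z1$i$j) / of_int (Z2$i$j)" using e[of i j] ij by simp
  hence "m \<in> \<real>" by simp
  then obtain x where x: "m = of_real x" by (auto elim: Reals_cases)
  have "x^2 \<ge> 0" by simp
  have "complex_of_real (x^2) = 1 \<or> complex_of_real (x^2) = complex_of_real (-1)"
    using m2 x by simp
  hence "x^2 = 1 \<or> x^2 = -1" by (simp only: of_real_eq_1_iff of_real_eq_iff)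
  hence "x^2 = 1" using \<open>x^2 \<ge> 0\<close> by linarith
  hence "m^2 = 1" using x by (metis of_real_1 of_real_power)
  hence "m = 1 \<or> m = -1" by (simp add: power2_eq_1_iff)
  thus ?thesis
  proof
    assume m1: "m = 1"
    have "Z1$i$j = Z2$i$j" for i j using e[of i j] m1 by simp
    thus ?thesis by (simp add: vec_eq_iff)
  next
    assume m1: "m = -1"
    have "of_int (Z1$i$j) = (- of_int (Z2$i$j) :: complex)" for i j using e[of i j] m1 by simp
    hence "Z1$i$j = - Z2$i$j" for i j by (metis of_int_minus of_int_eq_iff)
    thus ?thesis by (simp add: vec_eq_iff)
  qed
qed

lemma sc_zero: "sc c 0 = 0"
  unfolding sc_def by (simp add: vec_eq_iff)

theorem mainTheorem7:
  fixes r :: complex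
  assumes "\<not> algebraic r"
  shows "\<forall>\<psi> w1 w2. pglC_eq (evalC \<psi> r w1) (evalC \<psi> r w2) \<longrightarrow> pglZ_eq (evalZ w1) (evalZ w2)"
proof (intro allI impI)
  fix \<psi> w1 w2
  assume "pglC_eq (evalC \<psi> r w1) (evalC \<psi> r w2)"
  then obtain c where c: "c \<noteq> 0" "evalC \<psi> r w1 = (\<chi> i j. c * evalC \<psi> r w2 $ i $ j)"
    unfolding pglC_eq_def by blast
  define A1 where "A1 = evalC \<psi> 1 w1"
  define B1 where "B1 = evalC \<psi> 1 w2"
  define Z1 where "Z1 = evalZ w1"
  define Z2 where "Z2 = evalZ w2"
  have cr: "\<forall>i j k l. A1$i$j * B1$k$l - A1$k$l * B1$i$j = 0"
  proof (intro allI)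
    fix i j k l
    have "evalC \<psi> r w1 $i$j * evalC \<psi> r w2 $k$l - evalC \<psi> r w1 $k$l * evalC \<psi> r w2 $i$j = 0"
      by (simp add: c(2) algebra_simps)
    thus "A1$i$j * B1$k$l - A1$k$l * B1$i$j = 0"
      using PF_zero[OF assms(1) cross_PF[OF MPF_evalC[of \<psi> w1] MPF_evalC[of \<psi> w2], of i j k l]]
      unfolding A1_def B1_def by simp
  qed
  obtain c1 where c1: "c1 \<noteq> 0" "A1 ** Pm \<psi> = sc c1 (Pm \<psi> ** ofZ Z1)"
    using eval1[of \<psi> w1] unfolding A1_def Z1_def by blast
  obtain c2 where c2: "c2 \<noteq> 0" "B1 ** Pm \<psi> = sc c2 (Pm \<psi> ** ofZ Z2)"
    using eval1[of \<psi> w2] unfolding B1_def Z2_def by blast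
  have hZ1: "ofZ Z1 = sc (1/c1) (Pinv \<psi> ** A1 ** Pm \<psi>)" using unconj[OF c1(2) c1(1)] .
  have hZ2: "ofZ Z2 = sc (1/c2) (Pinv \<psi> ** B1 ** Pm \<psi>)" using unconj[OF c2(2) c2(1)] .
  have d1: "detZ Z1 = 1 \<or> detZ Z1 = -1" unfolding Z1_def by (rule detZ_eval)
  have d2: "detZ Z2 = 1 \<or> detZ Z2 = -1" unfolding Z2_def by (rule detZ_eval)
  have "\<exists>k l. B1$k$l \<noteq> 0"
  proof (rule ccontr)
    assume "\<not> (\<exists>k l. B1$k$l \<noteq> 0)"
    hence "B1 = 0" by (simp add: vec_eq_iff)
    hence "ofZ Z2 = 0" using hZ2 by (simp add: sc_zero)
    hence "\<forall>i j. Z2$i$j = 0" unfolding ofZ_def by (simp add: vec_eq_iff)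
    hence "detZ Z2 = 0" by (simp add: detZ_def)
    with d2 show False by simp
  qed
  then obtain k l where kl: "B1$k$l \<noteq> 0" by blast
  define m where "m = A1$k$l / B1$k$l"
  have A1B1: "A1 = sc m B1" unfolding m_def by (rule proportional[OF kl cr])
  have M2: "Pinv \<psi> ** B1 ** Pm \<psi> = sc c2 (ofZ Z2)"
    using hZ2 c2(1) by (simp add: sc_sc sc_1)
  have "ofZ Z1 = sc (1/c1) (Pinv \<psi> ** sc m B1 ** Pm \<psi>)" using hZ1 A1B1 by simp
  also have "\<dots> = sc (1/c1 * m) (Pinv \<psi> ** B1 ** Pm \<psi>)"
    by (simp add: mult_sc_right sc_mult_left sc_sc)
  also have "\<dots> = sc (1/c1 * m * c2) (ofZ Z2)" by (simp add: M2 sc_sc)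
  finally have "ofZ Z1 = sc (1/c1 * m * c2) (ofZ Z2)" .
  from final_int[OF this d1 d2] show "pglZ_eq (evalZ w1) (evalZ w2)"
    unfolding pglZ_eq_def Z1_def Z2_def .
qed

end
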